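(* Let $\mathcal{S}$ be a normal SPN over Boolean variables $X_1,\ldots,X_N$. The Bayesian network $\mathcal{B}$ with ADD CPDs described in the context (which satisfies $\Pr_{\mathcal{B}}(\mathbf{x})=\Pr_{\mathcal{S}}(\mathbf{x})$ for all $\mathbf{x}$) can be constructed from $\mathcal{S}$ in time $O(N|\mathcal{S}|)$.
   Context: SPNs. Let $X_1,\ldots,X_N$ be Boolean variables. An SPN is a finite rooted DAG whose internal nodes are sum and product nodes, each edge $(v,u)$ out of a sum node carrying a weight $w_{v,u}\ge 0$, and whose terminal nodes are indicators $\mathbb{I}_{x_n},\mathbb{I}_{\bar x_n}$ or univariate distribution nodes over some $X_n$ with parameter $p\in[0,1]$ (value $p\mathbb{I}_{x_n}+(1-p)\mathbb{I}_{\bar x_n}$); products multiply, sum nodes take $\sum_u w_{v,u}\mathrm{val}(u)$, $f_{\mathcal{S}}(\mathbf{x})$ is the root value and $\Pr_{\mathcal{S}}(\mathbf{x})=f_{\mathcal{S}}(\mathbf{x})/\sum_{\mathbf{x}'}f_{\mathcal{S}}(\mathbf{x}')$. The scope of a terminal node over $X_n$ is $\{X_n\}$; an internal node's scope is the union of its children's scopes. The SPN is over $X_1,\ldots,X_N$ if the root's scope is $\{X_1,\ldots,X_N\}$. It is normal if (1) it is complete (children of each sum node have equal scopes) and decomposable (children of each product node have pairwise disjoint scopes); (2) the weights leaving each sum node are nonnegative and sum to 1; (3) every terminal node is a univariate distribution node and every sum node has scope size at least 2. $|\mathcal{S}|$ is the number of nodes plus edges. Construction. The Bayesian network $\mathcal{B}$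 has variables $X_1,\ldots,X_N$ and, for each sum node $v$ with children $u_1,\ldots,u_l$, a hidden variable $H_v$ with values $\{1,\ldots,l\}$; its edges are exactly $H_v\to X$ for each sum node $v$ and $X\in\mathrm{scope}(v)$. The CPD of $H_v$ is the decision stump ADD $\mathcal{A}_{H_v}$ with $\Pr(H_v=i)=w_{v,u_i}$. The CPD of $X$ is the ADD $\mathcal{A}_X$ obtained by taking the subgraph of $\mathcal{S}$ induced by the nodes whose scope contains $X$, contracting every product node (each has a unique child there), turning each sum node $v$ into an ADD node labelled $H_v$ whose $i$-th out-edge goes to the image of its $i$-th child, and keeping each terminal node (a distribution over $X$) as an ADD terminal. $\Pr_{\mathcal{B}}(\mathbf{x})$ denotes the marginal over $X_1,\ldots,X_N$ of the product of all CPDs. Time is counted in elementary operations, with set insertion assumed to take $O(1)$ time. *)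

theory Defs
  imports Complex_Main
begin

text \<open>Boolean variables X_1..X_N are represented by indices 0..N-1 (X_(n+1) is n).
  An SPN is a list of nodes; node v refers to its children by their list index.
  Convention: nodes are listed in topological order (every child has a smaller
  index than its parent); the root is the last node.\<close>

datatype node =
    SumN "(nat \<times> real) list"
  | ProdN "nat list"
  | DistN nat real              \<comment> \<open>univariate distribution node over X_n with parameter p\<close>
  | IndN nat bool               \<comment> \<open>indicator of x_n (True) or of not x_n (False)\<close>

type_synonym spn = "node list"

fun spn_children :: "node \<Rightarrow> nat list" where
  "spn_children (SumN ws) = map fst ws"
| "spn_children (ProdN cs) = cs"
| "spn_children (DistN _ _) = []"
| "spn_children (IndN _ _) = []"

fun is_sum :: "node \<Rightarrow> bool" where
  "is_sum (SumN _) = True" | "is_sum _ = False"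

fun is_prod :: "node \<Rightarrow> bool" where
  "is_prod (ProdN _) = True" | "is_prod _ = False"

definition spn_root :: "spn \<Rightarrow> nat" where
  "spn_root S = length S - 1"

definition spn_edges :: "spn \<Rightarrow> (nat \<times> nat) set" where
  "spn_edges S = {(v, u). v < length S \<and> u \<in> set (spn_children (S ! v))}"

definition spn_size :: "spn \<Rightarrow> nat" where
  "spn_size S = length S + sum_list (map (\<lambda>x. length (spn_children x)) S)"

definition wf_spn :: "spn \<Rightarrow> bool" where
  "wf_spn S \<longleftrightarrow> S \<noteq> [] \<and>
     (\<forall>v<length S. \<forall>u\<in>set (spn_children (S ! v)). u < v) \<and>
     (\<forall>v<length S. distinct (spn_children (S ! v))) \<and>
     (\<forall>v<length S. (is_sum (S ! v) \<or> is_prod (S ! v)) \<longrightarrow> spn_children (S ! v) \<noteq> []) \<and>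
     (\<forall>v<length S. (spn_root S, v) \<in> (spn_edges S)\<^sup>*) \<and>
     (\<forall>v<length S. \<forall>n p. S ! v = DistN n p \<longrightarrow> 0 \<le> p \<and> p \<le> 1)"

inductive in_scope :: "spn \<Rightarrow> nat \<Rightarrow> nat \<Rightarrow> bool" where
  dist: "v < length S \<Longrightarrow> S ! v = DistN n p \<Longrightarrow> in_scope S v n"
| ind: "v < length S \<Longrightarrow> S ! v = IndN n b \<Longrightarrow> in_scope S v n"
| child: "v < length S \<Longrightarrow> u \<in> set (spn_children (S ! v)) \<Longrightarrow> in_scope S u n \<Longrightarrow> in_scope S v n"

definition scope :: "spn \<Rightarrow> nat \<Rightarrow> nat set" where
  "scope S v = {n. in_scope S v n}"

definition normal_spn :: "spn \<Rightarrow> nat \<Rightarrow> bool" where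
  "normal_spn S N \<longleftrightarrow> wf_spn S \<and>
     scope S (spn_root S) = {..<N} \<and>
     \<comment> \<open>completeness\<close>
     (\<forall>v<length S. is_sum (S ! v) \<longrightarrow>
        (\<forall>u1\<in>set (spn_children (S ! v)). \<forall>u2\<in>set (spn_children (S ! v)). scope S u1 = scope S u2)) \<and>
     \<comment> \<open>decomposability\<close>
     (\<forall>v<length S. \<forall>cs. S ! v = ProdN cs \<longrightarrow>
        (\<forall>i<length cs. \<forall>j<length cs. i \<noteq> j \<longrightarrow> scope S (cs ! i) \<inter> scope S (cs ! j) = {})) \<and>
     \<comment> \<open>normalised nonnegative weights\<close>
     (\<forall>v<length S. \<forall>ws. S ! v = SumN ws \<longrightarrow>
        (\<forall>uw\<in>set ws. 0 \<le> snd uw) \<and> sum_list (map snd ws) = 1) \<and>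
     \<comment> \<open>terminals are univariate distribution nodes; sum nodes have scope size at least 2\<close>
     (\<forall>v<length S. \<not> (\<exists>n b. S ! v = IndN n b)) \<and>
     (\<forall>v<length S. is_sum (S ! v) \<longrightarrow> card (scope S v) \<ge> 2)"

text \<open>ADD nodes: a decision node labelled H_v with the list of its children (ADD node ids),
  or a terminal (a distribution over X with parameter p). ADD node ids are the ids of
  the SPN nodes they are images of; an ADD is the list (indexed by SPN node id) of its
  nodes (None = no ADD node for this SPN node) together with its root id.\<close>
datatype add_node = ADec nat "nat list" | ATerm real

type_synonym add = "add_node option list \<times> nat"

text \<open>Image of an SPN node after contracting product nodes in the subgraph induced by
  the nodes whose scope contains X_n.\<close>
inductive img_rel :: "spn \<Rightarrow> nat \<Rightarrow> nat \<Rightarrow> nat \<Rightarrow> bool" where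
  keep: "\<not> is_prod (S ! u) \<Longrightarrow> img_rel S n u u"
| contract: "S ! u = ProdN cs \<Longrightarrow> c \<in> set cs \<Longrightarrow> n \<in> scope S c \<Longrightarrow> img_rel S n c w \<Longrightarrow> img_rel S n u w"

definition img :: "spn \<Rightarrow> nat \<Rightarrow> nat \<Rightarrow> nat" where
  "img S n u = (THE w. img_rel S n u w)"

definition add_image :: "spn \<Rightarrow> nat \<Rightarrow> nat \<Rightarrow> add_node" where
  "add_image S n v = (case S ! v of
       SumN ws \<Rightarrow> ADec v (map (\<lambda>uw. img S n (fst uw)) ws)
     | DistN m p \<Rightarrow> ATerm p
     | _ \<Rightarrow> ATerm 0)"

definition spec_add :: "spn \<Rightarrow> nat \<Rightarrow> add" where
  "spec_add S n =
     (map (\<lambda>v. if n \<in> scope S v \<and> \<not> is_prod (S ! v) then Some (add_image S n v) else None)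
          [0..<length S],
      img S n (spn_root S))"

text \<open>Hidden variables H_v with their decision-stump CPDs Pr(H_v = i) = w_(v,u_i).\<close>
fun hidden_of :: "nat \<Rightarrow> node \<Rightarrow> (nat \<times> real list) list" where
  "hidden_of v (SumN ws) = [(v, map snd ws)]"
| "hidden_of v _ = []"

definition spec_hidden :: "spn \<Rightarrow> (nat \<times> real list) list" where
  "spec_hidden S = concat (map (\<lambda>v. hidden_of v (S ! v)) [0..<length S])"

text \<open>Edges H_v -> X_n, represented by pairs (v, n).\<close>
definition spec_bn_edges :: "spn \<Rightarrow> (nat \<times> nat) set" where
  "spec_bn_edges S = {(v, n). v < length S \<and> is_sum (S ! v) \<and> n \<in> scope S v}"

text \<open>A Bayesian network: hidden CPDs, edge list, and ADD CPDs of X_1..X_N.\<close>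
type_synonym bn = "(nat \<times> real list) list \<times> (nat \<times> nat) list \<times> add list"

definition is_constructed_bn :: "spn \<Rightarrow> nat \<Rightarrow> bn \<Rightarrow> bool" where
  "is_constructed_bn S N B \<longleftrightarrow>
     (case B of (hs, es, adds) \<Rightarrow>
        hs = spec_hidden S \<and> set es = spec_bn_edges S \<and> length adds = N \<and>
        (\<forall>n<N. adds ! n = spec_add S n))"

text \<open>Each function returns its result together with the number of elementary
  operations performed (RAM model: array read / write / append and set insertion
  cost 1; scopes are stored as Boolean arrays of length N).\<close>

definition or_vec :: "bool list \<Rightarrow> bool list \<Rightarrow> bool list \<times> nat" where
  "or_vec a b = (map2 (\<or>) a b, length a)"

fun union_children :: "bool list list \<Rightarrow> bool list \<Rightarrow> nat list \<Rightarrow> bool list \<times> nat" where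
  "union_children sc acc [] = (acc, 1)"
| "union_children sc acc (c # cs) =
     (let (a1, k1) = or_vec acc (sc ! c); (a2, k2) = union_children sc a1 cs in (a2, 1 + k1 + k2))"

fun node_scope :: "nat \<Rightarrow> bool list list \<Rightarrow> node \<Rightarrow> bool list \<times> nat" where
  "node_scope N sc (DistN m p) = ((replicate N False)[m := True], N + 1)"
| "node_scope N sc (IndN m b) = ((replicate N False)[m := True], N + 1)"
| "node_scope N sc (SumN ws) =
     (let (a, k) = union_children sc (replicate N False) (map fst ws) in (a, N + length ws + k))"
| "node_scope N sc (ProdN cs) =
     (let (a, k) = union_children sc (replicate N False) cs in (a, N + k))"

fun scopes_loop :: "nat \<Rightarrow> bool list list \<Rightarrow> node list \<Rightarrow> bool list list \<times> nat" where
  "scopes_loop N sc [] = (sc, 1)"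
| "scopes_loop N sc (x # xs) =
     (let (a, k) = node_scope N sc x; (r, k') = scopes_loop N (sc @ [a]) xs in (r, k + 1 + k'))"

fun find_child :: "bool list list \<Rightarrow> nat \<Rightarrow> nat list \<Rightarrow> nat \<times> nat" where
  "find_child sc n [] = (0, 1)"
| "find_child sc n (c # cs) =
     (if sc ! c ! n then (c, 1) else (let (r, k) = find_child sc n cs in (r, k + 1)))"

fun add_step :: "bool list list \<Rightarrow> nat \<Rightarrow> nat list \<Rightarrow> nat \<Rightarrow> node \<Rightarrow> (add_node option \<times> nat) \<times> nat" where
  "add_step sc n im v x =
     (if \<not> sc ! v ! n then ((None, v), 1) else
      (case x of
         ProdN cs \<Rightarrow> (let (c, k) = find_child sc n cs in ((None, im ! c), k + 1))
       | SumN ws \<Rightarrow> ((Some (ADec v (map (\<lambda>uw. im ! fst uw) ws)), v), length ws + 1)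
       | DistN m p \<Rightarrow> ((Some (ATerm p), v), 1)
       | IndN m b \<Rightarrow> ((None, v), 1)))"

fun add_loop :: "bool list list \<Rightarrow> nat \<Rightarrow> nat \<Rightarrow> nat list \<Rightarrow> add_node option list \<Rightarrow> node list
                 \<Rightarrow> (add_node option list \<times> nat list) \<times> nat" where
  "add_loop sc n v im es [] = ((es, im), 1)"
| "add_loop sc n v im es (x # xs) =
     (let ((e, i), k) = add_step sc n im v x;
          (r, k') = add_loop sc n (Suc v) (im @ [i]) (es @ [e]) xs
      in (r, k + 1 + k'))"

definition build_add :: "bool list list \<Rightarrow> spn \<Rightarrow> nat \<Rightarrow> add \<times> nat" where
  "build_add sc S n = (let ((es, im), k) = add_loop sc n 0 [] [] S in ((es, im ! (length S - 1)), k + 1))"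

fun adds_list :: "bool list list \<Rightarrow> spn \<Rightarrow> nat list \<Rightarrow> add list \<times> nat" where
  "adds_list sc S [] = ([], 1)"
| "adds_list sc S (n # ns) =
     (let (a, k) = build_add sc S n; (r, k') = adds_list sc S ns in (a # r, k + k' + 1))"

fun he_loop :: "nat \<Rightarrow> bool list list \<Rightarrow> nat \<Rightarrow> node list
                \<Rightarrow> ((nat \<times> real list) list \<times> (nat \<times> nat) list) \<times> nat" where
  "he_loop N sc v [] = (([], []), 1)"
| "he_loop N sc v (x # xs) =
     (let ((hs, es), k) = he_loop N sc (Suc v) xs in
      (case x of
         SumN ws \<Rightarrow> (((v, map snd ws) # hs, map (\<lambda>n. (v, n)) (filter (\<lambda>n. sc ! v ! n) [0..<N]) @ es),
                      k + length ws + N + 1)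
       | _ \<Rightarrow> ((hs, es), k + 1)))"

definition construct_bn :: "spn \<Rightarrow> nat \<Rightarrow> bn \<times> nat" where
  "construct_bn S N =
     (let (sc, k1) = scopes_loop N [] S;
          ((hs, es), k2) = he_loop N sc 0 S;
          (adds, k3) = adds_list sc S [0..<N]
      in ((hs, es, adds), k1 + k2 + k3))"

end

theory Submission
  imports Defs
begin

definition ks :: "node list \<Rightarrow> nat" where
  "ks xs = sum_list (map (\<lambda>x. length (spn_children x)) xs)"

lemma ks_simps[simp]: "ks [] = 0" "ks (x#xs) = length (spn_children x) + ks xs"
  by (simp_all add: ks_def)

lemma union_children_len:
  "length (fst (union_children sc acc cs)) \<le> length acc"
proof (induction cs arbitrary: acc)
  case Nil then show ?case by simp
next
  case (Cons c cs)
  have "length (fst (or_vec acc (sc ! c))) \<le> length acc" by (simp add: or_vec_def)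
  then show ?case using Cons[of "fst (or_vec acc (sc ! c))"]
    by (simp add: split_beta) 
qed

lemma union_children_cost:
  "snd (union_children sc acc cs) \<le> 1 + length cs * (1 + length acc)"
proof (induction cs arbitrary: acc)
  case Nil then show ?case by simp
next
  case (Cons c cs)
  define a1 where "a1 = map2 (\<or>) acc (sc ! c)"
  have l: "length a1 \<le> length acc" by (simp add: a1_def)
  have "snd (union_children sc a1 cs) \<le> 1 + length cs * (1 + length acc)"
    using Cons[of a1] l by (meson add_le_mono le_refl mult_le_mono order_trans)
  then show ?case by (simp add: split_beta or_vec_def a1_def[symmetric])
qed

lemma node_scope_cost:
  "snd (node_scope N sc x) + 1 \<le> (N + 3) * (1 + length (spn_children x))"
proof (cases x)
  case (SumN ws)
  have "snd (union_children sc (replicate N False) (map fst ws)) \<le> 1 + length ws * (1 + N)"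
    using union_children_cost[of sc "replicate N False" "map fst ws"] by simp
  then show ?thesis using SumN by (simp add: split_beta algebra_simps)
next
  case (ProdN cs)
  have "snd (union_children sc (replicate N False) cs) \<le> 1 + length cs * (1 + N)"
    using union_children_cost[of sc "replicate N False" cs] by simp
  then show ?thesis using ProdN by (simp add: split_beta algebra_simps)
qed auto

lemma scopes_loop_cost:
  "snd (scopes_loop N sc xs) \<le> 1 + (N + 3) * (length xs + ks xs)"
proof (induction xs arbitrary: sc)
  case Nil then show ?case by simp
next
  case (Cons x xs)
  have "snd (scopes_loop N (sc @ [fst (node_scope N sc x)]) xs) \<le> 1 + (N + 3) * (length xs + ks xs)"
    using Cons by blast
  moreover have "snd (node_scope N sc x) + 1 \<le> (N + 3) * (1 + length (spn_children x))"
    by (rule node_scope_cost)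
  ultimately show ?case by (simp add: split_beta algebra_simps)
qed

lemma he_loop_cost:
  "snd (he_loop N sc v xs) \<le> 1 + (N + 1) * (length xs + ks xs)"
proof (induction xs arbitrary: v)
  case Nil then show ?case by simp
next
  case (Cons x xs)
  have IH: "snd (he_loop N sc (Suc v) xs) \<le> 1 + (N + 1) * (length xs + ks xs)"
    using Cons by blast
  show ?case
  proof (cases x)
    case (SumN ws)
    then show ?thesis using IH by (simp add: split_beta algebra_simps)
  qed (use IH in \<open>auto simp: split_beta algebra_simps\<close>)
qed

lemma find_child_cost: "snd (find_child sc n cs) \<le> length cs + 1"
  by (induction cs) (auto simp: split_beta)

lemma add_step_cost: "snd (add_step sc n im v x) \<le> length (spn_children x) + 2"
  using find_child_cost[of sc n]
  by (cases x) (auto simp: split_beta)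

lemma add_loop_cost:
  "snd (add_loop sc n v im es xs) \<le> 1 + 3 * length xs + ks xs"
proof (induction xs arbitrary: v im es)
  case Nil then show ?case by simp
next
  case (Cons x xs)
  obtain e i k where st: "add_step sc n im v x = ((e, i), k)" by (metis prod.exhaust)
  have "k \<le> length (spn_children x) + 2" using add_step_cost[of sc n im v x] st by simp
  moreover have "snd (add_loop sc n (Suc v) (im @ [i]) (es @ [e]) xs) \<le> 1 + 3 * length xs + ks xs"
    using Cons by blast
  ultimately show ?case by (simp add: st split_beta del: add_step.simps)
qed

lemma build_add_cost: "snd (build_add sc S n) \<le> 2 + 3 * spn_size S"
  using add_loop_cost[of sc n 0 "[]" "[]" S]
  by (simp add: build_add_def split_beta spn_size_def ks_def)

lemma adds_list_fst: "fst (adds_list sc S ns) = map (\<lambda>n. fst (build_add sc S n)) ns"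
  by (induction ns) (auto simp: split_beta)

lemma adds_list_cost: "snd (adds_list sc S ns) \<le> 1 + length ns * (3 + 3 * spn_size S)"
proof (induction ns)
  case (Cons a ns)
  then show ?case using build_add_cost[of sc S a] by (simp add: split_beta)
qed simp


lemma scope_char:
  assumes "v < length S"
  shows "n \<in> scope S v \<longleftrightarrow>
    (\<exists>p. S ! v = DistN n p) \<or> (\<exists>b. S ! v = IndN n b) \<or> (\<exists>u\<in>set (spn_children (S ! v)). n \<in> scope S u)"
  using assms unfolding scope_def
  by (auto intro: in_scope.intros elim: in_scope.cases)

lemma scope_mono_reach:
  assumes "(u, v) \<in> (spn_edges S)\<^sup>*"
  shows "scope S v \<subseteq> scope S u"
  using assms
proof induction
  case (step y z)
  then have "scope S z \<subseteq> scope S y"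
    by (auto simp: spn_edges_def scope_def intro: in_scope.child)
  then show ?case using step by blast
qed simp

lemma scopes_loop_struct:
  "length (fst (scopes_loop N sc xs)) = length sc + length xs \<and>
   take (length sc) (fst (scopes_loop N sc xs)) = sc \<and>
   (\<forall>i<length xs. fst (scopes_loop N sc xs) ! (length sc + i) =
       fst (node_scope N (take (length sc + i) (fst (scopes_loop N sc xs))) (xs ! i)))"
proof (induction xs arbitrary: sc)
  case Nil then show ?case by simp
next
  case (Cons x xs)
  define a where "a = fst (node_scope N sc x)"
  define R where "R = fst (scopes_loop N (sc @ [a]) xs)"
  have R: "fst (scopes_loop N sc (x # xs)) = R" by (simp add: R_def a_def split_beta)
  note IH = Cons[of "sc @ [a]", folded R_def]
  have len: "length R = length sc + length (x # xs)" using IH by simp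
  have tk: "take (Suc (length sc)) R = sc @ [a]" using IH by simp
  hence tk0: "take (length sc) R = sc"
    by (metis butlast_snoc butlast_take diff_Suc_1 length_append_singleton len
        Suc_le_mono le_add1 length_Cons add_Suc_right)
  have "R ! length sc = a" using tk
    by (metis length_append_singleton lessI nth_append_length nth_take)
  hence r0: "R ! length sc = fst (node_scope N (take (length sc) R) x)" using tk0 a_def by simp
  show ?case unfolding R
  proof (intro conjI allI impI)
    fix i assume i: "i < length (x # xs)"
    show "R ! (length sc + i) = fst (node_scope N (take (length sc + i) R) ((x # xs) ! i))"
    proof (cases i)
      case 0 then show ?thesis using r0 by simp
    next
      case (Suc j)
      then have "j < length xs" using i by simp
      then show ?thesis using IH Suc by simp
    qed
  qed (use len tk0 in auto)
qed

lemma union_children_correct: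
  assumes "length acc = N" "\<forall>c\<in>set cs. length (sc ! c) = N"
  shows "length (fst (union_children sc acc cs)) = N \<and>
    (\<forall>n<N. fst (union_children sc acc cs) ! n \<longleftrightarrow> acc ! n \<or> (\<exists>c\<in>set cs. sc ! c ! n))"
  using assms
proof (induction cs arbitrary: acc)
  case Nil then show ?case by simp
next
  case (Cons c cs)
  define a1 where "a1 = map2 (\<or>) acc (sc ! c)"
  have "length a1 = N" "\<forall>n<N. a1 ! n \<longleftrightarrow> acc ! n \<or> sc ! c ! n"
    using Cons.prems by (auto simp: a1_def)
  then show ?case using Cons.IH[of a1] Cons.prems
    by (auto simp: split_beta or_vec_def a1_def[symmetric])
qed

definition SC :: "spn \<Rightarrow> nat \<Rightarrow> bool list list" where "SC S N = fst (scopes_loop N [] S)"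

context
  fixes S :: spn and N :: nat
  assumes nrm: "normal_spn S N"
begin

lemma wf: "wf_spn S" using nrm by (simp add: normal_spn_def)

lemma scope_sub: "v < length S \<Longrightarrow> scope S v \<subseteq> {..<N}"
  using wf nrm scope_mono_reach[of "spn_root S" v S]
  by (auto simp: wf_spn_def normal_spn_def)

lemma child_lt: "v < length S \<Longrightarrow> u \<in> set (spn_children (S ! v)) \<Longrightarrow> u < v"
  using wf by (auto simp: wf_spn_def)


lemma SC_correct:
  "v < length S \<Longrightarrow> length (SC S N ! v) = N \<and> (\<forall>n<N. SC S N ! v ! n \<longleftrightarrow> n \<in> scope S v)"
proof (induction v rule: less_induct)
  case (less v)
  have st: "SC S N ! v = fst (node_scope N (take v (SC S N)) (S ! v))"
    using scopes_loop_struct[of N "[]" S] less.prems by (simp add: SC_def[of S N])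
  have lenSC: "length (SC S N) = length S" using scopes_loop_struct[of N "[]" S] by (simp add: SC_def[of S N])
  have ch: "\<And>u. u \<in> set (spn_children (S ! v)) \<Longrightarrow> take v (SC S N) ! u = SC S N ! u \<and> u < v"
    using child_lt less.prems by auto
  have chl: "\<forall>c\<in>set (spn_children (S ! v)). length (take v (SC S N) ! c) = N"
    using ch less.IH less.prems by auto
  have chs: "\<And>c n. c \<in> set (spn_children (S ! v)) \<Longrightarrow> n < N \<Longrightarrow> take v (SC S N) ! c ! n \<longleftrightarrow> n \<in> scope S c"
    using ch less.IH less.prems by auto
  show ?case
  proof (cases "S ! v")
    case (SumN ws)
    have "length (SC S N ! v) = N \<and> (\<forall>n<N. SC S N ! v ! n \<longleftrightarrow> (\<exists>c\<in>set (map fst ws). take v (SC S N) ! c ! n))"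
      using union_children_correct[of "replicate N False" N "map fst ws" "take v (SC S N)"] chl SumN st
      by (simp add: split_beta)
    then show ?thesis using chs SumN scope_char[OF less.prems] by auto
  next
    case (ProdN cs)
    have "length (SC S N ! v) = N \<and> (\<forall>n<N. SC S N ! v ! n \<longleftrightarrow> (\<exists>c\<in>set cs. take v (SC S N) ! c ! n))"
      using union_children_correct[of "replicate N False" N cs "take v (SC S N)"] chl ProdN st
      by (simp add: split_beta)
    then show ?thesis using chs ProdN scope_char[OF less.prems] by auto
  next
    case (DistN m p)
    have "m < N" using scope_sub[OF less.prems] scope_char[OF less.prems] DistN by auto
    then show ?thesis using DistN st scope_char[OF less.prems] by (auto simp: nth_list_update)
  next
    case (IndN m b)
    have "m < N" using scope_sub[OF less.prems] scope_char[OF less.prems] IndN by auto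
    then show ?thesis using IndN st scope_char[OF less.prems] by (auto simp: nth_list_update)
  qed
qed

end

lemma he_loop_hs:
  "fst (fst (he_loop N sc v xs)) = concat (map (\<lambda>i. hidden_of (v + i) (xs ! i)) [0..<length xs])"
proof (induction xs arbitrary: v)
  case Nil then show ?case by simp
next
  case (Cons x xs)
  have e: "[0..<length (x # xs)] = 0 # map Suc [0..<length xs]"
    by (simp add: upt_conv_Cons map_Suc_upt del: upt_Suc)
  show ?case unfolding e using Cons[of "Suc v"]
    by (cases x) (auto simp: split_beta o_def)
qed

lemma he_loop_es:
  "set (snd (fst (he_loop N sc v xs))) =
     {(v + i, n) | i n. i < length xs \<and> is_sum (xs ! i) \<and> n < N \<and> sc ! (v + i) ! n}"
proof (induction xs arbitrary: v)
  case Nil then show ?case by simp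
next
  case (Cons x xs)
  have IH: "set (snd (fst (he_loop N sc (Suc v) xs))) =
     {(Suc v + i, n) | i n. i < length xs \<and> is_sum (xs ! i) \<and> n < N \<and> sc ! (Suc v + i) ! n}"
    by (rule Cons)
  have A: "{(v + i, n) | i n. i < length (x#xs) \<and> is_sum ((x#xs) ! i) \<and> n < N \<and> sc ! (v + i) ! n}
    = {(v, n) | n. is_sum x \<and> n < N \<and> sc ! v ! n} \<union>
      {(Suc v + i, n) | i n. i < length xs \<and> is_sum (xs ! i) \<and> n < N \<and> sc ! (Suc v + i) ! n}"
    (is "?L = ?R")
  proof
    show "?L \<subseteq> ?R"
    proof
      fix z assume "z \<in> ?L"
      then obtain i n where z: "z = (v+i, n)" "i < length (x#xs)" "is_sum ((x#xs) ! i)" "n < N" "sc ! (v + i) ! n"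
        by blast
      show "z \<in> ?R"
      proof (cases i)
        case 0 then show ?thesis using z by auto
      next
        case (Suc j) then show ?thesis using z by auto
      qed
    qed
  next
    show "?R \<subseteq> ?L"
    proof
      fix z assume "z \<in> ?R"
      then show "z \<in> ?L"
      proof
        assume "z \<in> {(v, n) | n. is_sum x \<and> n < N \<and> sc ! v ! n}"
        then obtain n where "z = (v + 0, n)" "is_sum x" "n < N" "sc ! (v+0) ! n" by auto
        then show ?thesis by fastforce
      next
        assume "z \<in> {(Suc v + i, n) | i n. i < length xs \<and> is_sum (xs ! i) \<and> n < N \<and> sc ! (Suc v + i) ! n}"
        then obtain i n where "z = (v + Suc i, n)" "Suc i < length (x#xs)" "is_sum ((x#xs) ! Suc i)" "n < N" "sc ! (v + Suc i) ! n"
          by auto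
        then show ?thesis by blast
      qed
    qed
  qed
  show ?case unfolding A
    by (cases x) (auto simp: split_beta IH)
qed

lemma add_loop_struct:
  assumes "v = length im" "length es = length im"
  shows "length (fst (fst (add_loop sc n v im es xs))) = length im + length xs \<and>
   length (snd (fst (add_loop sc n v im es xs))) = length im + length xs \<and>
   take (length im) (fst (fst (add_loop sc n v im es xs))) = es \<and>
   take (length im) (snd (fst (add_loop sc n v im es xs))) = im \<and>
   (\<forall>i<length xs. (fst (fst (add_loop sc n v im es xs)) ! (length im + i),
                    snd (fst (add_loop sc n v im es xs)) ! (length im + i)) =
       fst (add_step sc n (take (length im + i) (snd (fst (add_loop sc n v im es xs)))) (length im + i) (xs ! i)))"
  using assms
proof (induction xs arbitrary: v im es)
  case Nil then show ?case by simp
next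
  case (Cons x xs)
  obtain e i k where st: "add_step sc n im v x = ((e, i), k)" by (metis prod.exhaust)
  define E where "E = fst (fst (add_loop sc n (Suc v) (im @ [i]) (es @ [e]) xs))"
  define I where "I = snd (fst (add_loop sc n (Suc v) (im @ [i]) (es @ [e]) xs))"
  have R: "fst (fst (add_loop sc n v im es (x # xs))) = E" "snd (fst (add_loop sc n v im es (x # xs))) = I"
    by (simp_all add: E_def I_def st split_beta del: add_step.simps)
  have IH: "length E = Suc (length im) + length xs \<and> length I = Suc (length im) + length xs \<and>
     take (Suc (length im)) E = es @ [e] \<and> take (Suc (length im)) I = im @ [i] \<and>
     (\<forall>j<length xs. (E ! (Suc (length im) + j), I ! (Suc (length im) + j)) =
       fst (add_step sc n (take (Suc (length im) + j) I) (Suc (length im) + j) (xs ! j)))"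
    using Cons.IH[of "Suc v" "im @ [i]" "es @ [e]"] Cons.prems by (simp add: E_def I_def)
  have tE: "take (length im) E = es" using IH Cons.prems
    by (metis butlast_snoc butlast_take diff_Suc_1 le_add1 length_append_singleton)
  have tI: "take (length im) I = im" using IH
    by (metis butlast_snoc butlast_take diff_Suc_1 le_add1 length_append_singleton)
  have e0: "E ! length im = e" using IH Cons.prems
    by (metis length_append_singleton lessI nth_append_length nth_take)
  have i0: "I ! length im = i" using IH
    by (metis length_append_singleton lessI nth_append_length nth_take)
  show ?case unfolding R
  proof (intro conjI allI impI)
    fix j assume j: "j < length (x # xs)"
    show "(E ! (length im + j), I ! (length im + j)) =
       fst (add_step sc n (take (length im + j) I) (length im + j) ((x # xs) ! j))"
    proof (cases j)
      case 0 then show ?thesis using e0 i0 tI st Cons.prems by simp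
    next
      case (Suc j')
      then have "j' < length xs" using j by simp
      then show ?thesis using IH Suc by simp
    qed
  qed (use IH tE tI in auto)
qed

lemma find_child_correct:
  assumes "\<exists>c\<in>set cs. sc ! c ! n"
  shows "fst (find_child sc n cs) \<in> set cs \<and> sc ! fst (find_child sc n cs) ! n"
  using assms by (induction cs) (auto simp: split_beta)


context
  fixes S :: spn and N :: nat
  assumes nrm: "normal_spn S N"
begin

lemma unique_child:
  assumes "v < length S" "S ! v = ProdN cs" "c1 \<in> set cs" "c2 \<in> set cs"
    "n \<in> scope S c1" "n \<in> scope S c2"
  shows "c1 = c2"
proof -
  obtain i j where "i < length cs" "j < length cs" "cs ! i = c1" "cs ! j = c2"
    using assms by (meson in_set_conv_nth)
  moreover have "\<forall>i<length cs. \<forall>j<length cs. i \<noteq> j \<longrightarrow> scope S (cs ! i) \<inter> scope S (cs ! j) = {}"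
    using nrm assms(1,2) by (simp add: normal_spn_def)
  ultimately show ?thesis using assms(5,6)
  proof -
    assume i: "i < length cs" "j < length cs" "cs ! i = c1" "cs ! j = c2"
      and d: "\<forall>i<length cs. \<forall>j<length cs. i \<noteq> j \<longrightarrow> scope S (cs ! i) \<inter> scope S (cs ! j) = {}"
    show ?thesis
    proof (rule ccontr)
      assume "c1 \<noteq> c2"
      then have "i \<noteq> j" using i by auto
      then have "scope S c1 \<inter> scope S c2 = {}" using d i by metis
      then show False using assms(5,6) by blast
    qed
  qed
qed

lemma complete: "v < length S \<Longrightarrow> is_sum (S ! v) \<Longrightarrow> u1 \<in> set (spn_children (S ! v)) \<Longrightarrow>
   u2 \<in> set (spn_children (S ! v)) \<Longrightarrow> scope S u1 = scope S u2"
proof -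
  assume a: "v < length S" "is_sum (S ! v)" "u1 \<in> set (spn_children (S ! v))" "u2 \<in> set (spn_children (S ! v))"
  have c: "\<forall>v<length S. is_sum (S ! v) \<longrightarrow>
        (\<forall>u1\<in>set (spn_children (S ! v)). \<forall>u2\<in>set (spn_children (S ! v)). scope S u1 = scope S u2)"
    using nrm unfolding normal_spn_def by (elim conjE)
  show ?thesis using c a by blast
qed

lemma img_rel_nonprod: "\<not> is_prod (S ! v) \<Longrightarrow> img_rel S n v w \<longleftrightarrow> w = v"
  by (auto intro: img_rel.keep elim: img_rel.cases)

lemma img_uniq:
  "v < length S \<Longrightarrow> n \<in> scope S v \<Longrightarrow> \<exists>!w. img_rel S n v w"
proof (induction v rule: less_induct)
  case (less v)
  show ?case
  proof (cases "is_prod (S ! v)")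
    case False then show ?thesis using img_rel_nonprod by auto
  next
    case True
    then obtain cs where cs: "S ! v = ProdN cs" by (cases "S ! v") auto
    obtain c where c: "c \<in> set cs" "n \<in> scope S c"
      using scope_char[OF less.prems(1), of n] less.prems cs by auto
    have cv: "c < v" using child_lt[OF nrm less.prems(1)] cs c by auto
    then obtain w where w: "img_rel S n c w" "\<And>w'. img_rel S n c w' \<Longrightarrow> w' = w"
      using less.IH[of c] less.prems c cv by (metis order.strict_trans)
    have "img_rel S n v w" using cs c w(1) by (auto intro: img_rel.contract)
    moreover have "w' = w" if "img_rel S n v w'" for w'
      using that
    proof cases
      case keep then show ?thesis using True by simp
    next
      case (contract cs' c')
      then have "c' = c" using unique_child[OF less.prems(1) cs _ c(1) _ c(2)] cs by auto
      then show ?thesis using w(2) contract by blast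
    qed
    ultimately show ?thesis by blast
  qed
qed

lemma img_rel_img: "v < length S \<Longrightarrow> n \<in> scope S v \<Longrightarrow> img_rel S n v w \<Longrightarrow> img S n v = w"
  unfolding img_def using img_uniq by (metis the1_equality)

lemma img_nonprod: "v < length S \<Longrightarrow> n \<in> scope S v \<Longrightarrow> \<not> is_prod (S ! v) \<Longrightarrow> img S n v = v"
  using img_rel_img img_rel.keep by blast

lemma img_prod: "v < length S \<Longrightarrow> S ! v = ProdN cs \<Longrightarrow> c \<in> set cs \<Longrightarrow> n \<in> scope S c \<Longrightarrow>
  img S n v = img S n c"
proof -
  assume a: "v < length S" "S ! v = ProdN cs" "c \<in> set cs" "n \<in> scope S c"
  have "c < v" using child_lt[OF nrm a(1)] a by auto
  then have cl: "c < length S" using a(1) by linarith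
  have "img_rel S n c (img S n c)" using img_uniq[OF cl a(4)] img_rel_img[OF cl a(4)] by blast
  hence "img_rel S n v (img S n c)" using a by (auto intro: img_rel.contract)
  moreover have "n \<in> scope S v" using scope_char[OF a(1)] a by auto
  ultimately show ?thesis using img_rel_img a(1) by blast
qed

lemma adds_correct:
  assumes n: "n < N"
  defines "E \<equiv> fst (fst (add_loop (SC S N) n 0 [] [] S))"
      and "I \<equiv> snd (fst (add_loop (SC S N) n 0 [] [] S))"
  shows "v < length S \<Longrightarrow> (n \<in> scope S v \<longrightarrow> I ! v = img S n v) \<and>
     E ! v = (if n \<in> scope S v \<and> \<not> is_prod (S ! v) then Some (add_image S n v) else None)"
proof (induction v rule: less_induct)
  case (less v)
  note st0 = add_loop_struct[of 0 "[]" "[]" "SC S N" n S, simplified, folded E_def I_def]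
  have st: "(E ! v, I ! v) = fst (add_step (SC S N) n (take v I) v (S ! v))"
    using st0 less.prems by auto
  have scv: "SC S N ! v ! n \<longleftrightarrow> n \<in> scope S v" using SC_correct[OF nrm less.prems] n by auto
  have chI: "take v I ! u = img S n u" if "u \<in> set (spn_children (S ! v))" "n \<in> scope S u" for u
  proof -
    have "u < v" using child_lt[OF nrm less.prems] that by auto
    then show ?thesis using less.IH[of u] that less.prems by auto
  qed
  have chsc: "SC S N ! u ! n \<longleftrightarrow> n \<in> scope S u" if "u \<in> set (spn_children (S ! v))" for u
  proof -
    have "u < v" using child_lt[OF nrm less.prems] that by auto
    then show ?thesis using SC_correct[OF nrm, of u] less.prems n by auto
  qed
  show ?case
  proof (cases "n \<in> scope S v")
    case False then show ?thesis using st scv by simp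
  next
    case T: True
    show ?thesis
    proof (cases "S ! v")
      case (SumN ws)
      have allc: "n \<in> scope S u" if "u \<in> set (spn_children (S ! v))" for u
      proof -
        obtain u' where "u' \<in> set (spn_children (S ! v))" "n \<in> scope S u'"
          using scope_char[OF less.prems, of n] T SumN by auto
        moreover have "scope S u = scope S u'"
          using complete less.prems SumN that calculation(1) by (metis is_sum.simps(1))
        ultimately show ?thesis by simp
      qed
      have "map (\<lambda>uw. take v I ! fst uw) ws = map (\<lambda>uw. img S n (fst uw)) ws"
        using chI allc SumN by auto
      then show ?thesis using st scv T SumN img_nonprod[OF less.prems T]
        by (simp add: add_image_def)
    next
      case (ProdN cs)
      obtain c where c: "c \<in> set cs" "n \<in> scope S c"
        using scope_char[OF less.prems, of n] T ProdN by auto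
      have ex: "\<exists>c\<in>set cs. SC S N ! c ! n" using c chsc ProdN by auto
      define c' where "c' = fst (find_child (SC S N) n cs)"
      have c': "c' \<in> set cs" "n \<in> scope S c'"
        using find_child_correct[OF ex] chsc ProdN by (auto simp: c'_def)
      have "c' = c" using unique_child[OF less.prems ProdN c'(1) c(1) c'(2) c(2)] .
      have "I ! v = take v I ! c'" using st scv T ProdN by (simp add: split_beta c'_def)
      also have "\<dots> = img S n c'" using chI c' ProdN by auto
      also have "\<dots> = img S n v" using img_prod[OF less.prems ProdN c'] by simp
      finally show ?thesis using st scv T ProdN by (simp add: split_beta)
    next
      case (DistN m p)
      then show ?thesis using st scv T img_nonprod[OF less.prems T] by (simp add: add_image_def)
    next
      case (IndN m b)
      moreover have "\<not> (\<exists>n b. S ! v = IndN n b)" using nrm less.prems unfolding normal_spn_def by blast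
      ultimately show ?thesis by blast
    qed
  qed
qed

lemma build_add_correct:
  assumes n: "n < N"
  shows "fst (build_add (SC S N) S n) = spec_add S n"
proof -
  define E where "E = fst (fst (add_loop (SC S N) n 0 [] [] S))"
  define I where "I = snd (fst (add_loop (SC S N) n 0 [] [] S))"
  note st0 = add_loop_struct[of 0 "[]" "[]" "SC S N" n S, simplified, folded E_def I_def]
  have ne: "S \<noteq> []" using wf[OF nrm] by (simp add: wf_spn_def)
  have rt: "spn_root S < length S" using ne by (simp add: spn_root_def)
  have nr: "n \<in> scope S (spn_root S)" using nrm n by (simp add: normal_spn_def)
  have "E = map (\<lambda>v. if n \<in> scope S v \<and> \<not> is_prod (S ! v) then Some (add_image S n v) else None)
          [0..<length S]"
    by (rule nth_equalityI) (use st0 adds_correct[OF n, folded E_def I_def] in auto)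
  moreover have "I ! (length S - 1) = img S n (spn_root S)"
    using adds_correct[OF n, folded E_def I_def, OF rt] nr by (simp add: spn_root_def)
  ultimately show ?thesis
    by (simp add: build_add_def spec_add_def split_beta E_def I_def)
qed

lemma N_pos: "N \<ge> 1"
proof -
  have "\<exists>n. n \<in> scope S v" if "v < length S" for v
    using that
  proof (induction v rule: less_induct)
    case (less v)
    show ?case
    proof (cases "S ! v")
      case (SumN ws)
      then obtain u where "u \<in> set (spn_children (S ! v))"
        using wf[OF nrm] less.prems by (fastforce simp: wf_spn_def)
      moreover have "u < v" using child_lt[OF nrm less.prems] calculation by auto
      ultimately obtain n where "n \<in> scope S u" using less.IH[of u] less.prems by auto
      then show ?thesis using scope_char[OF less.prems] \<open>u \<in> _\<close> by blast
    next
      case (ProdN cs)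
      then obtain u where "u \<in> set (spn_children (S ! v))"
        using wf[OF nrm] less.prems by (fastforce simp: wf_spn_def)
      moreover have "u < v" using child_lt[OF nrm less.prems] calculation by auto
      ultimately obtain n where "n \<in> scope S u" using less.IH[of u] less.prems by auto
      then show ?thesis using scope_char[OF less.prems] \<open>u \<in> _\<close> by blast
    qed (use scope_char[OF less.prems] in auto)
  qed
  moreover have "S \<noteq> []" using wf[OF nrm] by (simp add: wf_spn_def)
  ultimately obtain n where "n \<in> scope S (spn_root S)" by (metis diff_less length_greater_0_conv spn_root_def zero_less_one)
  then show ?thesis using nrm by (auto simp: normal_spn_def)
qed

end

theorem theorem6:
  "\<exists>C::nat. \<forall>(S::spn) (N::nat). normal_spn S N \<longrightarrow>
      is_constructed_bn S N (fst (construct_bn S N)) \<and>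
      snd (construct_bn S N) \<le> C * N * spn_size S"
proof (intro exI allI impI conjI)
  fix S N assume nrm: "normal_spn S N"
  obtain sc k1 where s1: "scopes_loop N [] S = (sc, k1)" by (metis prod.exhaust)
  obtain hs es k2 where s2: "he_loop N sc 0 S = ((hs, es), k2)" by (metis prod.exhaust)
  obtain adds k3 where s3: "adds_list sc S [0..<N] = (adds, k3)" by (metis prod.exhaust)
  have cb: "construct_bn S N = ((hs, es, adds), k1 + k2 + k3)"
    by (simp add: construct_bn_def s1 s2 s3)
  have scd: "sc = SC S N" by (simp add: SC_def s1)
  have lsc: "length sc = length S" using scopes_loop_struct[of N "[]" S] s1 by simp
  have hs: "hs = spec_hidden S" using he_loop_hs[of N sc 0 S] s2 by (simp add: spec_hidden_def)
  have es: "set es = spec_bn_edges S"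
  proof -
    have "set es = {(i, n) | i n. i < length S \<and> is_sum (S ! i) \<and> n < N \<and> sc ! i ! n}"
      using he_loop_es[of N sc 0 S] s2 by simp
    also have "\<dots> = spec_bn_edges S"
      using SC_correct[OF nrm] scope_sub[OF nrm] unfolding scd spec_bn_edges_def by fastforce
    finally show ?thesis .
  qed
  have ad: "adds = map (\<lambda>n. fst (build_add sc S n)) [0..<N]"
    using adds_list_fst[of sc S "[0..<N]"] s3 by simp
  show "is_constructed_bn S N (fst (construct_bn S N))"
    unfolding cb is_constructed_bn_def using hs es ad build_add_correct[OF nrm] scd by simp
  have N1: "N \<ge> 1" by (rule N_pos[OF nrm])
  have sz: "length S + ks S = spn_size S" by (simp add: spn_size_def ks_def)
  have c1: "k1 \<le> 1 + (N + 3) * spn_size S" using scopes_loop_cost[of N "[]" S] s1 sz by simp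
  have c2: "k2 \<le> 1 + (N + 1) * spn_size S" using he_loop_cost[of N sc 0 S] s2 sz by simp
  have c3: "k3 \<le> 1 + N * (3 + 3 * spn_size S)" using adds_list_cost[of sc S "[0..<N]"] s3 by simp
  have "S \<noteq> []" using wf[OF nrm] by (simp add: wf_spn_def)
  then have s1': "spn_size S \<ge> 1" by (cases S) (auto simp: spn_size_def)
  define P where "P = N * spn_size S"
  have p1: "P \<ge> 1" "P \<ge> N" "P \<ge> spn_size S" using N1 s1' by (simp_all add: P_def)
  have e: "(N + 3) * spn_size S = P + 3 * spn_size S" "(N + 1) * spn_size S = P + spn_size S"
    "N * (3 + 3 * spn_size S) = 3 * N + 3 * P" "20 * N * spn_size S = 20 * P"
    by (simp_all add: P_def algebra_simps)
  have "k1 + k2 + k3 \<le> 20 * N * spn_size S"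
    using c1 c2 c3 p1 unfolding e by linarith
  then show "snd (construct_bn S N) \<le> 20 * N * spn_size S" by (simp add: cb)
qed


end
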